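(* Let $p$ be a prime and let $G$ be a non-cyclic finite abelian $p$-group of exponent $\exp(G)=p^{\alpha}$, where $\alpha\ge 2$. Then $n_G\ge p^{\alpha+1}-p^{\alpha}+p^{\alpha-1}$. As a consequence, $n_G>\exp(G)$.
   Context: For a finite group $G$ and $x\in G$, let $I_{\mathcal C}(x)=\{y\in G : \langle x,y\rangle \text{ is cyclic}\}$. For a nontrivial finite group $G$, $n_G=\max\{|I_{\mathcal C}(x)| : x\in G\setminus\{1\}\}$. *)

theory Defs
  imports "HOL-Algebra.Algebra"
begin

definition I_C :: "('a, 'b) monoid_scheme \<Rightarrow> 'a \<Rightarrow> 'a set" where
  "I_C G x = {y \<in> carrier G. cyclic_group (subgroup_generated G {x, y})}"

definition n_G :: "('a, 'b) monoid_scheme \<Rightarrow> nat" where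
  "n_G G = Max ((\<lambda>x. card (I_C G x)) ` (carrier G - {\<one>\<^bsub>G\<^esub>}))"

definition group_exp :: "('a, 'b) monoid_scheme \<Rightarrow> nat" where
  "group_exp G = Lcm ((\<lambda>x. group.ord G x) ` carrier G)"

end

theory Submission imports Defs "HOL-Computational_Algebra.Primes" begin

lemma (in group) cyc2:
  assumes z: "z \<in> carrier G" and x: "x \<in> generate G {z}" and y: "y \<in> generate G {z}"
  shows "cyclic_group (subgroup_generated G {x, y})"
proof -
  obtain a where a: "x = z [^] (a::int)" using x generate_pow[OF z] by auto
  obtain b where b: "y = z [^] (b::int)" using y generate_pow[OF z] by auto
  define d where "d = gcd a b"
  obtain u v where uv: "u * a + v * b = d" using bezout_int d_def by blast
  define w where "w = z [^] d"
  have wc: "w \<in> carrier G" using z w_def by simp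
  have xc: "x \<in> carrier G" "y \<in> carrier G" using a b z by auto
  have "x = w [^] (a div d)"
    unfolding w_def a using z by (simp add: int_pow_pow d_def)
  hence xw: "x \<in> generate G {w}" using generate_pow[OF wc] by auto
  have "y = w [^] (b div d)"
    unfolding w_def b using z by (simp add: int_pow_pow d_def)
  hence yw: "y \<in> generate G {w}" using generate_pow[OF wc] by auto
  have "w = z [^] (u * a + v * b)" using uv w_def by simp
  also have "\<dots> = x [^] u \<otimes> y [^] v"
    using z a b by (simp add: int_pow_mult int_pow_pow mult.commute)
  finally have weq: "w = x [^] u \<otimes> y [^] v" .
  have sg: "subgroup (generate G {x, y}) G" using xc by (intro generate_is_subgroup) auto
  have "x \<in> generate G {x, y}" "y \<in> generate G {x, y}" by (auto intro: generate.incl)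
  hence "x [^] u \<in> generate G {x, y}" "y [^] v \<in> generate G {x, y}"
    using subgroup_int_pow_closed[OF sg] by auto
  hence "w \<in> generate G {x, y}" using weq subgroup.m_closed[OF sg] by simp
  hence "generate G {w} \<subseteq> generate G {x, y}"
    by (intro generate_subgroup_incl generate_is_subgroup) (auto simp: xc)
  moreover have "generate G {x, y} \<subseteq> generate G {w}"
    using xw yw by (intro generate_subgroup_incl generate_is_subgroup) (auto simp: wc)
  ultimately have "subgroup_generated G {x, y} = subgroup_generated G {w}"
    unfolding subgroup_generated_def using xc wc by (simp add: Int_absorb1)
  thus ?thesis using cyclic_group_generated by simp
qed

theorem lemma2p4:
  fixes G (structure) and p \<alpha> :: nat
  assumes "comm_group G" and "finite (carrier G)"
    and "Factorial_Ring.prime p" and "\<exists>k. order G = p ^ k"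
    and "\<not> cyclic_group G"
    and "group_exp G = p ^ \<alpha>" and "\<alpha> \<ge> 2"
  shows "n_G G \<ge> p ^ (\<alpha> + 1) - p ^ \<alpha> + p ^ (\<alpha> - 1) \<and> n_G G > group_exp G"
proof -
  interpret comm_group G by fact
  note fin = assms(2)
  have pr: "Factorial_Ring.prime p" by fact
  have p2: "p \<ge> 2" using prime_ge_2_nat[OF pr] .
  obtain kk where ok: "order G = p ^ kk" using assms(4) by blast
  have ordp: "\<exists>e. ord y = p ^ e" if "y \<in> carrier G" for y
  proof -
    have "ord y dvd p ^ kk" using ord_dvd_group_order[OF that] ok by simp
    thus ?thesis using divides_primepow_nat[OF pr] by blast
  qed
  have expo: "y [^] (p ^ \<alpha>) = \<one>" if "y \<in> carrier G" for y
  proof -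
    have "ord y dvd group_exp G" unfolding group_exp_def using that by (intro dvd_Lcm) auto
    thus ?thesis using pow_eq_id[OF that] assms(6) by simp
  qed
  define M where "M = Max (ord ` carrier G)"
  have Min: "M \<in> ord ` carrier G" unfolding M_def using fin by (intro Max_in) auto
  have Mge: "ord y \<le> M" if "y \<in> carrier G" for y unfolding M_def using fin that by (intro Max_ge) auto
  have Mdvd: "ord y dvd M" if yc: "y \<in> carrier G" for y
  proof -
    obtain e where e: "ord y = p ^ e" using ordp[OF yc] by blast
    obtain y0 where y0: "y0 \<in> carrier G" "M = ord y0" using Min by blast
    obtain f where f: "M = p ^ f" using ordp[OF y0(1)] y0(2) by auto
    have "p ^ e \<le> p ^ f" using Mge[OF yc] e f by simp
    hence "e \<le> f" using p2 by (simp add: power_le_imp_le_exp)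
    thus ?thesis using e f by (simp add: le_imp_power_dvd)
  qed
  have "group_exp G = M"
    unfolding group_exp_def
    by (rule dvd_antisym) (auto intro!: Lcm_least Mdvd dvd_Lcm Min)
  then obtain g where g: "g \<in> carrier G" "ord g = p ^ \<alpha>" using Min M_def assms(6) by auto
  define q where "q = p ^ (\<alpha> - 1)"
  have pq: "p * q = p ^ \<alpha>"
  proof -
    have "\<alpha> = Suc (\<alpha> - 1)" using assms(7) by simp
    hence "p ^ \<alpha> = p ^ Suc (\<alpha> - 1)" by simp
    thus ?thesis unfolding q_def by simp
  qed
  have qpos: "q > 0" unfolding q_def using p2 by simp
  have qlt: "q < p ^ \<alpha>" 
  proof -
    have "1 * q < p * q" using qpos p2 by (intro mult_strict_right_mono) auto
    thus ?thesis using pq by simp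
  qed
  define x where "x = g [^] q"
  have xc: "x \<in> carrier G" unfolding x_def using g by simp
  have xp: "x [^] p = \<one>" unfolding x_def using g pq expo[OF g(1)] by (simp add: nat_pow_pow mult.commute)
  have x1: "x \<noteq> \<one>"
  proof
    assume "x = \<one>"
    hence "p ^ \<alpha> dvd q" using pow_eq_id[OF g(1)] g(2) x_def by simp
    thus False using qlt qpos by (simp add: nat_dvd_not_less)
  qed
  have ordx: "ord x = p"
  proof -
    have "ord x dvd p" using pow_eq_id[OF xc] xp by simp
    hence "ord x = 1 \<or> ord x = p" using pr by (simp add: prime_nat_iff)
    thus ?thesis using ord_eq_1[OF xc] x1 by auto
  qed
  define C where "C = generate G {g}"
  have gen_nat: "C = {g [^] k | k. k \<in> (UNIV :: nat set)}"
    unfolding C_def using generate_pow_on_finite_carrier[OF fin g(1)] .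
  have powC: "g [^] (n::nat) \<in> C" for n using gen_nat by auto
  have Csub: "subgroup C G" unfolding C_def using g by (intro generate_is_subgroup) auto
  have Ccar: "C \<subseteq> carrier G" using subgroup.subset[OF Csub] .
  have xC: "x \<in> C" unfolding x_def by (rule powC)
  obtain y where yc: "y \<in> carrier G" and yC: "y \<notin> C"
  proof (rule ccontr)
    assume "\<not> thesis"
    hence "carrier G \<subseteq> C" using that by blast
    hence "C = carrier G" using Ccar by blast
    hence "subgroup_generated G {g} = G" unfolding subgroup_generated_def C_def using g by simp
    thus False using assms(5) g unfolding cyclic_group_def by blast
  qed
  define P where "P j \<longleftrightarrow> y [^] (p ^ j) \<in> C" for j
  have Pa: "P \<alpha>" unfolding P_def using expo[OF yc] subgroup.one_closed[OF Csub] by simp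
  define j0 where "j0 = (LEAST j. P j)"
  have Pj0: "P j0" unfolding j0_def using Pa by (rule LeastI)
  have j0nz: "j0 \<noteq> 0" 
  proof
    assume "j0 = 0"
    thus False using Pj0 yC yc unfolding P_def by simp
  qed
  define w where "w = y [^] (p ^ (j0 - 1))"
  have wc: "w \<in> carrier G" unfolding w_def using yc by simp
  have wC: "w \<notin> C"
  proof -
    have "\<not> P (j0 - 1)" unfolding j0_def by (rule not_less_Least) (use j0nz j0_def in auto)
    thus ?thesis unfolding P_def w_def .
  qed
  have wpC: "w [^] p \<in> C"
  proof -
    have "p ^ (j0 - 1) * p = p ^ j0" using j0nz by (metis Suc_diff_1 neq0_conv power_Suc2)
    thus ?thesis using Pj0 unfolding P_def w_def using yc by (simp add: nat_pow_pow)
  qed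
  obtain kk2 where kk2: "w [^] p = g [^] (kk2::nat)" using wpC gen_nat by auto
  have "g [^] (kk2 * q) = \<one>"
  proof -
    have "g [^] (kk2 * q) = (w [^] p) [^] q" using kk2 g by (simp add: nat_pow_pow)
    also have "\<dots> = w [^] (p ^ \<alpha>)" using wc pq by (simp add: nat_pow_pow)
    also have "\<dots> = \<one>" using expo[OF wc] .
    finally show ?thesis .
  qed
  hence "p * q dvd kk2 * q" using pow_eq_id[OF g(1)] g(2) pq by simp
  hence "p dvd kk2" using qpos by simp
  then obtain m where m: "kk2 = p * m" by blast
  define z where "z = w \<otimes> inv (g [^] m)"
  have zc: "z \<in> carrier G" unfolding z_def using wc g by simp
  have zp: "z [^] p = \<one>"
  proof -
    have "z [^] p = w [^] p \<otimes> inv (g [^] m) [^] p"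
      unfolding z_def using wc g by (intro pow_mult_distrib) (auto simp: m_comm)
    also have "\<dots> = g [^] (p * m) \<otimes> inv ((g [^] m) [^] p)" using kk2 m g by (simp add: nat_pow_inv)
    also have "\<dots> = \<one>" using g by (simp add: nat_pow_pow mult.commute)
    finally show ?thesis .
  qed
  have zC: "z \<notin> C"
  proof
    assume "z \<in> C"
    hence "z \<otimes> g [^] m \<in> C" using powC subgroup.m_closed[OF Csub] by blast
    moreover have "z \<otimes> g [^] m = w" unfolding z_def using wc g by (simp add: m_assoc)
    ultimately show False using wC by simp
  qed
  define K where "K = {y \<in> carrier G. y [^] q = \<one>}"
  have Kc: "K \<subseteq> carrier G" unfolding K_def by auto
  have finK: "finite K" using Kc fin by (rule finite_subset)
  have subK: "subgroup K G"
  proof (rule subgroupI)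
    show "K \<subseteq> carrier G" by fact
    show "K \<noteq> {}" unfolding K_def by (auto intro!: exI[of _ \<one>])
    show "inv a \<in> K" if "a \<in> K" for a using that unfolding K_def by (simp add: nat_pow_inv)
    show "a \<otimes> b \<in> K" if "a \<in> K" "b \<in> K" for a b
      using that unfolding K_def by (simp add: pow_mult_distrib m_comm)
  qed
  have "card K dvd p ^ kk" using lagrange[OF subK] ok by (metis dvd_triv_right)
  then obtain e where e: "card K = p ^ e" using divides_primepow_nat[OF pr] by blast
  define B where "B = (\<lambda>j. g [^] (p * j)) ` {..<q}"
  have injg: "i = j" if "i < p ^ \<alpha>" "j < p ^ \<alpha>" "g [^] i = g [^] (j::nat)" for i j
    using ord_inj[OF g(1)] that g(2) unfolding inj_on_def
    by (metis atLeastAtMost_iff le0 less_Suc_eq_le Suc_pred' pos2 gr_zeroI less_nat_zero_code)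
  have cardB: "card B = q"
    unfolding B_def
  proof (subst card_image)
    show "inj_on (\<lambda>j. g [^] (p * j)) {..<q}"
    proof (rule inj_onI)
      fix i j assume "i \<in> {..<q}" "j \<in> {..<q}" "g [^] (p * i) = g [^] (p * j)"
      moreover have "p * i < p ^ \<alpha>" "p * j < p ^ \<alpha>" 
        using calculation pq p2 by (simp_all only: lessThan_iff pq[symmetric] mult_less_cancel1) simp_all
      ultimately have "p * i = p * j" using injg by blast
      thus "i = j" using p2 by simp
    qed
  qed simp
  have BK: "B \<subseteq> K"
  proof
    fix b assume "b \<in> B"
    then obtain j where b: "b = g [^] (p * j)" unfolding B_def by blast
    have "b [^] q = g [^] ((p * q) * j)" unfolding b using g by (simp add: nat_pow_pow mult.commute mult.left_commute)
    also have "\<dots> = \<one>" using g expo[OF g(1)] pq by (simp add: nat_pow_pow[symmetric])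
    finally show "b \<in> K" unfolding K_def using b g by simp
  qed
  have BC: "B \<subseteq> C" unfolding B_def using powC by auto
  have zK: "z \<in> K"
  proof -
    have "\<alpha> - 1 = Suc (\<alpha> - 2)" using assms(7) by arith
    hence "q = p * p ^ (\<alpha> - 2)" unfolding q_def by simp
    hence "z [^] q = (z [^] p) [^] (p ^ (\<alpha> - 2))" using zc by (simp add: nat_pow_pow)
    thus ?thesis unfolding K_def using zc zp by simp
  qed
  have "B \<subset> K" using BK zK zC BC by blast
  hence "card B < card K" using finK by (simp add: psubset_card_mono)
  hence "p ^ (\<alpha> - 1) < p ^ e" using cardB e q_def by simp
  hence "\<alpha> - 1 < e" using p2 by (simp add: power_less_imp_less_exp)
  hence "\<alpha> \<le> e" using assms(7) by simp
  hence cardK: "p ^ \<alpha> \<le> card K" using e p2 by (simp add: power_increasing)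
  define f where "f = (\<lambda>(i::nat, k). g [^] i \<otimes> k)"
  define A where "A = f ` ({1..<p} \<times> K)"
  have key: "(g [^] i \<otimes> k) [^] q = x [^] i" if "k \<in> K" for i :: nat and k
  proof -
    have kc: "k \<in> carrier G" "k [^] q = \<one>" using that unfolding K_def by auto
    have "(g [^] i \<otimes> k) [^] q = (g [^] i) [^] q \<otimes> k [^] q"
      using g kc by (intro pow_mult_distrib) (auto simp: m_comm)
    also have "\<dots> = x [^] i" using g kc unfolding x_def by (simp add: nat_pow_pow mult.commute)
    finally show ?thesis .
  qed
  have xi1: "x [^] i \<noteq> \<one>" if "i \<in> {1..<p}" for i :: nat
    using that pow_eq_id[OF xc] ordx by (auto dest: dvd_imp_le)
  have xinj: "i = j" if "i < p" "j < p" "x [^] i = x [^] (j::nat)" for i j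
    using ord_inj[OF xc] that ordx unfolding inj_on_def
    by (metis atLeastAtMost_iff le0 less_Suc_eq_le Suc_pred' gr_zeroI less_nat_zero_code)
  have injf: "inj_on f ({1..<p} \<times> K)"
  proof (rule inj_onI, clarify)
    fix i k j k' assume h: "i \<in> {1..<p}" "k \<in> K" "j \<in> {1..<p}" "k' \<in> K" "f (i, k) = f (j, k')"
    have "x [^] i = x [^] j" using key[OF h(2), of i] key[OF h(4), of j] h(5) unfolding f_def by simp
    hence ij: "i = j" using xinj h by auto
    have "k \<in> carrier G" "k' \<in> carrier G" using h Kc by auto
    thus "i = j \<and> k = k'" using h(5) ij g unfolding f_def by simp
  qed
  have cardA: "card A = (p - 1) * card K"
    unfolding A_def using card_image[OF injf] by (simp add: card_cartesian_product)
  have finA: "finite A" unfolding A_def using finK by simp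
  have finB: "finite B" unfolding B_def by simp
  have AB: "A \<inter> B = {}"
  proof (rule ccontr)
    assume "A \<inter> B \<noteq> {}"
    then obtain i k where h: "i \<in> {1..<p}" "k \<in> K" "f (i, k) \<in> B" unfolding A_def by blast
    hence "f (i, k) [^] q = \<one>" using BK unfolding K_def by auto
    thus False using key[OF h(2), of i] xi1[OF h(1)] unfolding f_def by simp
  qed
  have AI: "A \<subseteq> I_C G x"
  proof
    fix a assume "a \<in> A"
    then obtain i k where h: "i \<in> {1..<p}" "k \<in> K" "a = g [^] i \<otimes> k" unfolding A_def f_def by auto
    have ac: "a \<in> carrier G" using h Kc g by auto
    have aq: "a [^] q = x [^] i" using key[OF h(2)] h(3) by simp
    have "\<not> p dvd i" using h(1) by (auto dest: dvd_imp_le)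
    hence "coprime p i" using pr by (intro prime_imp_coprime)
    hence "gcd (int i) (int p) = 1" by (simp add: coprime_iff_gcd_eq_1 gcd.commute)
    then obtain u v where uv: "u * int i + v * int p = 1" using bezout_int[of "int i" "int p"] by auto
    have "x = x [^] (1::int)" using xc by simp
    also have "\<dots> = x [^] (u * int i + v * int p)" using uv by simp
    also have "\<dots> = x [^] (u * int i) \<otimes> x [^] (v * int p)" by (rule int_pow_mult[OF xc])
    also have "\<dots> = (x [^] int i) [^] u \<otimes> (x [^] int p) [^] v"
      by (simp only: int_pow_pow[OF xc] mult.commute)
    also have "\<dots> = (a [^] int q) [^] u" using xp aq ac xc by (simp add: int_pow_int)
    also have "\<dots> = a [^] (int q * u)" using ac by (simp add: int_pow_pow)
    finally have "x \<in> generate G {a}" using generate_pow[OF ac] by auto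
    moreover have "a \<in> generate G {a}" by (rule generate.incl) simp
    ultimately have "cyclic_group (subgroup_generated G {x, a})" by (rule cyc2[OF ac])
    thus "a \<in> I_C G x" unfolding I_C_def using ac by simp
  qed
  have BI: "B \<subseteq> I_C G x"
  proof
    fix b assume "b \<in> B"
    hence "b \<in> C" using BC by auto
    hence "cyclic_group (subgroup_generated G {x, b})" using cyc2[OF g(1)] xC unfolding C_def by blast
    thus "b \<in> I_C G x" unfolding I_C_def using \<open>b \<in> C\<close> Ccar by auto
  qed
  have finI: "finite (I_C G x)" unfolding I_C_def using fin by simp
  have "card A + card B = card (A \<union> B)" using card_Un_disjoint[OF finA finB AB] by simp
  also have "\<dots> \<le> card (I_C G x)" using AI BI finI by (intro card_mono) auto
  also have "\<dots> \<le> n_G G" unfolding n_G_def using fin xc x1 by (intro Max_ge) auto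
  finally have tot: "card A + card B \<le> n_G G" .
  have main: "(p - 1) * p ^ \<alpha> + q \<le> n_G G"
  proof -
    have "(p - 1) * p ^ \<alpha> \<le> (p - 1) * card K" using cardK by (rule mult_le_mono2)
    thus ?thesis using cardA cardB tot by linarith
  qed
  have eq: "p ^ (\<alpha> + 1) - p ^ \<alpha> + p ^ (\<alpha> - 1) = (p - 1) * p ^ \<alpha> + q"
    unfolding q_def by (simp add: diff_mult_distrib)
  have "p ^ \<alpha> < (p - 1) * p ^ \<alpha> + q"
  proof -
    have "1 * p ^ \<alpha> \<le> (p - 1) * p ^ \<alpha>" using p2 by (intro mult_le_mono1) simp
    thus ?thesis using qpos by linarith
  qed
  thus ?thesis using main eq assms(6) by simp

qed

end
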